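(* Let $\alpha>1$. Let $\mathcal{A}:\mathcal{D}\mapsto(\mathcal{A}_1(\mathcal{D}),\mathcal{A}_2(\mathcal{D}))\in\mathcal{Z}_1\times\mathcal{Z}_2$ be a randomized algorithm whose first output satisfies $D_\alpha(\mathcal{A}_1(\mathcal{D})\,\|\,\mathcal{A}_1(\mathcal{D}'))\le\varepsilon_1$ for all adjacent datasets $\mathcal{D},\mathcal{D}'$ (the two outputs $\mathcal{A}_1(\mathcal{D}),\mathcal{A}_2(\mathcal{D})$ may be dependent). Let $\mathcal{B}:\mathcal{Z}_1\times\mathcal{Z}_2\to\mathcal{W}$ be a randomized algorithm satisfying $\sup_{\mathbf{z}_1,\mathbf{z}_2,\mathbf{z}_2'}D_\alpha(\mathcal{B}(\mathbf{z}_1,\mathbf{z}_2)\,\|\,\mathcal{B}(\mathbf{z}_1,\mathbf{z}_2'))\le\varepsilon_2$. Assume the randomness used by $\mathcal{A}$ and $\mathcal{B}$ is independent (and that all relevant densities exist). Then for all adjacent $\mathcal{D},\mathcal{D}'$, $$D_\alpha\big((\mathcal{A}_1(\mathcal{D}),\mathcal{B}(\mathcal{A}(\mathcal{D})))\,\big\|\,(\mathcal{A}_1(\mathcal{D}'),\mathcal{B}(\mathcal{A}(\mathcal{D}')))\big)\le\varepsilon_1+\varepsilon_2,$$ i.e. the pair jointly satisfies $(\alpha,\varepsilon_1+\varepsilon_2)$-Rényi DP.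
   Context: For $\alpha>1$ the Rényi divergence between random variables $X\sim P$, $Y\sim Q$ is $D_\alpha(X\|Y)=\frac{1}{\alpha-1}\log\mathbb{E}_{x\sim Q}[(P(x)/Q(x))^\alpha]$. An algorithm is $(\alpha,\varepsilon)$-Rényi DP if its output distributions on any two adjacent datasets have Rényi divergence of order $\alpha$ at most $\varepsilon$; here "adjacent" refers to an arbitrary fixed symmetric adjacency relation on datasets. *)

theory Defs
  imports "HOL-Probability.Probability"
begin

definition renyi_div :: "real \<Rightarrow> 'a measure \<Rightarrow> 'a measure \<Rightarrow> ereal" where
  "renyi_div \<alpha> P Q =
     (if sets P = sets Q \<and> absolutely_continuous Q P then
        (let I = (\<integral>\<^sup>+ x. ennreal ((enn2real (RN_deriv Q P x)) powr \<alpha>) \<partial>Q)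
         in if I = \<infinity> then \<infinity> else ereal (ln (enn2real I) / (\<alpha> - 1)))
      else \<infinity>)"

end

theory Submission
  imports Defs
begin

definition G :: "real \<Rightarrow> ennreal \<Rightarrow> ennreal \<Rightarrow> ennreal" where
  "G \<alpha> x y = (if x = 0 then 0 else if y = 0 then \<infinity>
      else ennreal (enn2real x powr \<alpha> * enn2real y powr (1 - \<alpha>)))"

lemma tangent_real:
  fixes \<alpha> x y t :: real
  assumes "\<alpha> > 1" "x > 0" "y > 0" "t > 0"
  shows "\<alpha> * t powr (\<alpha> - 1) * x \<le> x powr \<alpha> * y powr (1 - \<alpha>) + (\<alpha> - 1) * t powr \<alpha> * y"
proof -
  define q where "q = \<alpha> / (\<alpha> - 1)"
  have q1: "q > 1" "1/\<alpha> + 1/q = 1" using assms by (auto simp: q_def field_simps)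
  define A where "A = x * y powr ((1 - \<alpha>) / \<alpha>)"
  define B where "B = t powr (\<alpha> - 1) * y powr ((\<alpha> - 1) / \<alpha>)"
  have "A * B \<le> A powr \<alpha> / \<alpha> + B powr q / q"
    using Youngs_inequality[of \<alpha> q A B] q1 assms by (auto simp: A_def B_def)
  moreover have "A * B = x * t powr (\<alpha> - 1)"
  proof -
    have "y powr ((1 - \<alpha>) / \<alpha>) * y powr ((\<alpha> - 1) / \<alpha>) = 1"
      using assms by (simp add: powr_add[symmetric] field_simps)
    then show ?thesis unfolding A_def B_def by (simp add: algebra_simps)
  qed
  moreover have "A powr \<alpha> = x powr \<alpha> * y powr (1 - \<alpha>)"
    using assms by (simp add: A_def powr_mult powr_powr)
  moreover have "B powr q = t powr \<alpha> * y"
    using assms q1 by (simp add: B_def q_def powr_mult powr_powr)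
  ultimately have "x * t powr (\<alpha> - 1) \<le> x powr \<alpha> * y powr (1 - \<alpha>) / \<alpha> + t powr \<alpha> * y / q"
    by simp
  then have "\<alpha> * (x * t powr (\<alpha> - 1)) \<le> \<alpha> * (x powr \<alpha> * y powr (1 - \<alpha>) / \<alpha> + t powr \<alpha> * y / q)"
    using assms by (intro mult_left_mono) auto
  also have "\<dots> = x powr \<alpha> * y powr (1 - \<alpha>) + (\<alpha> - 1) * t powr \<alpha> * y"
    using assms by (simp add: q_def field_simps)
  finally show ?thesis by (simp add: algebra_simps)
qed

lemma measurable_G[measurable]:
  assumes [measurable]: "f \<in> borel_measurable M" "g \<in> borel_measurable M"
  shows "(\<lambda>x. G \<alpha> (f x) (g x)) \<in> borel_measurable M"
  unfolding G_def by measurable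

lemma tangent_enn:
  assumes "\<alpha> > 1" "t > 0" "x \<noteq> \<infinity>" "y \<noteq> \<infinity>"
  shows "ennreal (\<alpha> * t powr (\<alpha> - 1)) * x \<le> G \<alpha> x y + ennreal ((\<alpha> - 1) * t powr \<alpha>) * y"
proof (cases "x = 0 \<or> y = 0")
  case True
  then show ?thesis by (auto simp: G_def)
next
  case False
  define x' y' where "x' = enn2real x" "y' = enn2real y"
  have xy: "x = ennreal x'" "y = ennreal y'" "x' > 0" "y' > 0"
    using assms False by (auto simp: x'_y'_def enn2real_positive_iff ennreal_enn2real_if top.not_eq_extremum zero_less_iff_neq_zero)
  have "\<alpha> * t powr (\<alpha> - 1) * x' \<le> x' powr \<alpha> * y' powr (1 - \<alpha>) + (\<alpha> - 1) * t powr \<alpha> * y'"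
    using tangent_real[of \<alpha> x' y' t] assms xy by auto
  then show ?thesis using xy assms
    by (simp add: G_def ennreal_mult'[symmetric] ennreal_plus[symmetric] del: ennreal_plus)
qed

lemma powr_ident:
  fixes x0 y0 \<alpha> :: real
  assumes "x0 > 0" "y0 > 0"
  shows "(x0 / y0) powr (\<alpha> - 1) * x0 = x0 powr \<alpha> * y0 powr (1 - \<alpha>)"
    and "(x0 / y0) powr \<alpha> * y0 = x0 powr \<alpha> * y0 powr (1 - \<alpha>)"
proof -
  have "(x0 / y0) powr (\<alpha> - 1) * x0 = x0 powr (\<alpha> - 1) * x0 powr 1 * inverse (y0 powr (\<alpha> - 1))"
    using assms by (subst powr_divide) (auto simp: divide_inverse)
  also have "\<dots> = x0 powr (\<alpha> - 1 + 1) * y0 powr (- (\<alpha> - 1))"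
    using assms by (simp only: powr_add powr_minus)
  also have "\<dots> = x0 powr \<alpha> * y0 powr (1 - \<alpha>)" by simp
  finally show "(x0 / y0) powr (\<alpha> - 1) * x0 = x0 powr \<alpha> * y0 powr (1 - \<alpha>)" .
  have "(x0 / y0) powr \<alpha> * y0 = x0 powr \<alpha> * (y0 powr 1 * inverse (y0 powr \<alpha>))"
    using assms by (subst powr_divide) (auto simp: divide_inverse)
  also have "\<dots> = x0 powr \<alpha> * y0 powr (1 + - \<alpha>)"
    using assms by (simp only: powr_add powr_minus)
  also have "\<dots> = x0 powr \<alpha> * y0 powr (1 - \<alpha>)" by simp
  finally show "(x0 / y0) powr \<alpha> * y0 = x0 powr \<alpha> * y0 powr (1 - \<alpha>)" .
qed

lemma G_jensen:
  assumes a: "\<alpha> > 1" and [measurable]: "X \<in> borel_measurable M" "Y \<in> borel_measurable M"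
    and fX: "integral\<^sup>N M X \<noteq> \<infinity>" and fY: "integral\<^sup>N M Y \<noteq> \<infinity>"
  shows "G \<alpha> (integral\<^sup>N M X) (integral\<^sup>N M Y) \<le> (\<integral>\<^sup>+ x. G \<alpha> (X x) (Y x) \<partial>M)"
proof -
  consider "integral\<^sup>N M X = 0" | "integral\<^sup>N M X \<noteq> 0" "integral\<^sup>N M Y = 0"
    | "integral\<^sup>N M X \<noteq> 0" "integral\<^sup>N M Y \<noteq> 0" by blast
  then show ?thesis
  proof cases
    case 1 then show ?thesis by (simp add: G_def)
  next
    case 2
    have Y0: "AE x in M. Y x = 0" using 2 by (simp add: nn_integral_0_iff_AE)
    have "\<not> (AE x in M. X x = 0)" using 2 by (simp add: nn_integral_0_iff_AE)
    then have pos: "emeasure M {x \<in> space M. X x \<noteq> 0} \<noteq> 0"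
      by (subst (asm) AE_iff_measurable[OF _ refl]) auto
    have "\<infinity> = (\<integral>\<^sup>+ x. \<infinity> * indicator {x \<in> space M. X x \<noteq> 0} x \<partial>M)"
      using pos by (simp add: nn_integral_cmult_indicator ennreal_mult_eq_top_iff)
    also have "\<dots> \<le> (\<integral>\<^sup>+ x. G \<alpha> (X x) (Y x) \<partial>M)"
      using Y0 by (intro nn_integral_mono_AE) (auto simp: G_def indicator_def)
    finally show ?thesis by (simp add: top_unique)
  next
    case 3
    define x0 where "x0 = enn2real (integral\<^sup>N M X)"
    define y0 where "y0 = enn2real (integral\<^sup>N M Y)"
    have x0: "x0 > 0" "integral\<^sup>N M X = ennreal x0"
      using 3 fX by (auto simp: x0_def enn2real_positive_iff top.not_eq_extremum zero_less_iff_neq_zero ennreal_enn2real_if)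
    have y0: "y0 > 0" "integral\<^sup>N M Y = ennreal y0"
      using 3 fY by (auto simp: y0_def enn2real_positive_iff top.not_eq_extremum zero_less_iff_neq_zero ennreal_enn2real_if)
    define t where "t = x0 / y0"
    have t: "t > 0" using x0 y0 by (simp add: t_def)
    have "ennreal (\<alpha> * t powr (\<alpha> - 1)) * integral\<^sup>N M X = (\<integral>\<^sup>+ x. ennreal (\<alpha> * t powr (\<alpha> - 1)) * X x \<partial>M)"
      by (simp add: nn_integral_cmult)
    also have "\<dots> \<le> (\<integral>\<^sup>+ x. G \<alpha> (X x) (Y x) + ennreal ((\<alpha> - 1) * t powr \<alpha>) * Y x \<partial>M)"
      using nn_integral_PInf_AE[OF _ fX] nn_integral_PInf_AE[OF _ fY]
      by (intro nn_integral_mono_AE) (auto intro!: tangent_enn a t)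
    also have "\<dots> = (\<integral>\<^sup>+ x. G \<alpha> (X x) (Y x) \<partial>M) + ennreal ((\<alpha> - 1) * t powr \<alpha>) * integral\<^sup>N M Y"
      by (simp add: nn_integral_add nn_integral_cmult)
    finally have ineq: "ennreal (\<alpha> * t powr (\<alpha> - 1)) * ennreal x0
        \<le> (\<integral>\<^sup>+ x. G \<alpha> (X x) (Y x) \<partial>M) + ennreal ((\<alpha> - 1) * t powr \<alpha>) * ennreal y0"
      using x0 y0 by simp
    have Gval: "G \<alpha> (integral\<^sup>N M X) (integral\<^sup>N M Y) = ennreal (x0 powr \<alpha> * y0 powr (1 - \<alpha>))"
      using x0 y0 by (simp add: G_def)
    show ?thesis
    proof (cases "(\<integral>\<^sup>+ x. G \<alpha> (X x) (Y x) \<partial>M) = \<infinity>")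
      case True then show ?thesis by simp
    next
      case False
      define g where "g = enn2real (\<integral>\<^sup>+ x. G \<alpha> (X x) (Y x) \<partial>M)"
      have g: "(\<integral>\<^sup>+ x. G \<alpha> (X x) (Y x) \<partial>M) = ennreal g" "g \<ge> 0"
        using False by (auto simp: g_def ennreal_enn2real_if)
      have "\<alpha> * t powr (\<alpha> - 1) * x0 \<le> g + (\<alpha> - 1) * t powr \<alpha> * y0"
        using ineq a t x0 y0 g
        by (simp add: g ennreal_mult'[symmetric] ennreal_plus[symmetric] del: ennreal_plus)
      moreover have "t powr (\<alpha> - 1) * x0 = x0 powr \<alpha> * y0 powr (1 - \<alpha>)"
        "t powr \<alpha> * y0 = x0 powr \<alpha> * y0 powr (1 - \<alpha>)"
        using powr_ident[OF x0(1) y0(1)] by (auto simp: t_def)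
      ultimately have "x0 powr \<alpha> * y0 powr (1 - \<alpha>) \<le> g"
        by (simp add: algebra_simps)
      then show ?thesis using Gval g by simp
    qed
  qed
qed

lemma dens_int1:
  assumes [measurable]: "p \<in> borel_measurable M" and P: "prob_space (density M p)"
  shows "integral\<^sup>N M p = 1"
proof -
  have "1 = emeasure (density M p) (space (density M p))"
    using prob_space.emeasure_space_1[OF P] by simp
  also have "\<dots> = (\<integral>\<^sup>+ x. p x * indicator (space M) x \<partial>M)"
    by (simp add: emeasure_density)
  also have "\<dots> = integral\<^sup>N M p"
    by (intro nn_integral_cong) (simp add: indicator_def)
  finally show ?thesis by simp
qed

lemma dens_fin_AE:
  assumes "p \<in> borel_measurable M" and "prob_space (density M p)"
  shows "AE x in M. p x \<noteq> \<infinity>"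
  using dens_int1[OF assms] assms(1) by (intro nn_integral_PInf_AE) auto

lemma ac_density_iff:
  assumes [measurable]: "p \<in> borel_measurable M" "q \<in> borel_measurable M"
  shows "absolutely_continuous (density M q) (density M p) \<longleftrightarrow> (AE x in M. q x = 0 \<longrightarrow> p x = 0)"
proof
  assume ac: "absolutely_continuous (density M q) (density M p)"
  have "{x \<in> space M. q x = 0} \<in> null_sets (density M q)"
    by (subst null_sets_density_iff) auto
  with ac have "{x \<in> space M. q x = 0} \<in> null_sets (density M p)"
    unfolding absolutely_continuous_def by auto
  then have "AE x in M. x \<in> {x \<in> space M. q x = 0} \<longrightarrow> p x = 0"
    by (subst (asm) null_sets_density_iff) auto
  then show "AE x in M. q x = 0 \<longrightarrow> p x = 0"
    by (elim AE_mp) (auto intro!: AE_I2)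
next
  assume H: "AE x in M. q x = 0 \<longrightarrow> p x = 0"
  show "absolutely_continuous (density M q) (density M p)"
    unfolding absolutely_continuous_def
  proof
    fix A assume "A \<in> null_sets (density M q)"
    then have A: "A \<in> sets M" "AE x in M. x \<in> A \<longrightarrow> q x = 0"
      using null_sets_density_iff[of q M A] by auto
    have "AE x in M. x \<in> A \<longrightarrow> p x = 0" using A(2) H by eventually_elim auto
    with A(1) show "A \<in> null_sets (density M p)"
      by (subst null_sets_density_iff) auto
  qed
qed

lemma RN_integral_eq:
  assumes a: "\<alpha> > 1" and [measurable]: "p \<in> borel_measurable M" "q \<in> borel_measurable M"
    and P: "prob_space (density M p)" and Q: "prob_space (density M q)"
    and H: "AE x in M. q x = 0 \<longrightarrow> p x = 0"
  shows "(\<integral>\<^sup>+ x. ennreal ((enn2real (RN_deriv (density M q) (density M p) x)) powr \<alpha>) \<partial>density M q)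
       = (\<integral>\<^sup>+ x. G \<alpha> (p x) (q x) \<partial>M)"
proof -
  define f where "f x = (if q x = 0 then 0 else p x / q x)" for x
  have [measurable]: "f \<in> borel_measurable M" unfolding f_def by measurable
  have pf: "AE x in M. p x \<noteq> \<infinity>" and qf: "AE x in M. q x \<noteq> \<infinity>"
    using dens_fin_AE[OF _ P] dens_fin_AE[OF _ Q] by auto
  have "density (density M q) f = density M (\<lambda>x. q x * f x)"
    by (simp add: density_density_eq)
  also have "\<dots> = density M p"
  proof (rule density_cong)
    show "AE x in M. q x * f x = p x"
      using H qf
      by eventually_elim (auto simp: f_def ennreal_times_divide mult.commute[of "q _" "p _"] ennreal_mult_divide_eq)
  qed auto
  finally have eq: "density (density M q) f = density M p" .
  have "AE x in density M q. f x = RN_deriv (density M q) (density M p) x"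
    by (rule RN_deriv_unique_sigma_finite[OF _ eq]) (auto intro: prob_space_imp_sigma_finite P)
  then have "(\<integral>\<^sup>+ x. ennreal ((enn2real (RN_deriv (density M q) (density M p) x)) powr \<alpha>) \<partial>density M q)
      = (\<integral>\<^sup>+ x. ennreal ((enn2real (f x)) powr \<alpha>) \<partial>density M q)"
    by (intro nn_integral_cong_AE) (auto elim: eventually_mono)
  also have "\<dots> = (\<integral>\<^sup>+ x. q x * ennreal ((enn2real (f x)) powr \<alpha>) \<partial>M)"
    by (simp add: nn_integral_density)
  also have "\<dots> = (\<integral>\<^sup>+ x. G \<alpha> (p x) (q x) \<partial>M)"
  proof (rule nn_integral_cong_AE)
    show "AE x in M. q x * ennreal ((enn2real (f x)) powr \<alpha>) = G \<alpha> (p x) (q x)"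
      using H pf qf
    proof eventually_elim
      case (elim x)
      show ?case
      proof (cases "q x = 0 \<or> p x = 0")
        case True then show ?thesis using elim by (auto simp: G_def f_def)
      next
        case False
        define p' q' where "p' = enn2real (p x)" "q' = enn2real (q x)"
        have pq: "p x = ennreal p'" "q x = ennreal q'" "p' > 0" "q' > 0"
          using elim False by (auto simp: p'_q'_def enn2real_positive_iff ennreal_enn2real_if top.not_eq_extremum zero_less_iff_neq_zero)
        have "f x = ennreal (p' / q')" using pq by (simp add: f_def divide_ennreal)
        then show ?thesis using pq powr_ident(2)[OF pq(3,4), of \<alpha>]
          by (simp add: G_def ennreal_mult'[symmetric] mult.commute)
      qed
    qed
  qed
  finally show ?thesis .
qed

lemma renyi_le_imp:
  assumes a: "\<alpha> > 1" and [measurable]: "p \<in> borel_measurable M" "q \<in> borel_measurable M"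
    and P: "prob_space (density M p)" and Q: "prob_space (density M q)"
    and R: "renyi_div \<alpha> (density M p) (density M q) \<le> ereal \<epsilon>"
  shows "(\<integral>\<^sup>+ x. G \<alpha> (p x) (q x) \<partial>M) \<le> ennreal (exp ((\<alpha> - 1) * \<epsilon>))"
proof -
  have ac: "absolutely_continuous (density M q) (density M p)"
    using R by (auto simp: renyi_div_def split: if_splits)
  then have H: "AE x in M. q x = 0 \<longrightarrow> p x = 0" by (simp add: ac_density_iff)
  define I where "I = (\<integral>\<^sup>+ x. ennreal ((enn2real (RN_deriv (density M q) (density M p) x)) powr \<alpha>) \<partial>density M q)"
  have IG: "I = (\<integral>\<^sup>+ x. G \<alpha> (p x) (q x) \<partial>M)"
    unfolding I_def by (rule RN_integral_eq[OF a _ _ P Q H]) auto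
  have eq: "renyi_div \<alpha> (density M p) (density M q) = (if I = \<infinity> then \<infinity> else ereal (ln (enn2real I) / (\<alpha> - 1)))"
    using ac unfolding renyi_div_def I_def Let_def by (simp only: sets_density simp_thms if_True)
  have R': "(if I = \<infinity> then \<infinity> else ereal (ln (enn2real I) / (\<alpha> - 1))) \<le> ereal \<epsilon>"
    using R unfolding eq .
  then have Ifin: "I \<noteq> \<infinity>" by (auto split: if_splits)
  with R' have le: "ln (enn2real I) / (\<alpha> - 1) \<le> \<epsilon>" by simp
  show ?thesis
  proof (cases "enn2real I = 0")
    case True
    then have "I = 0" using Ifin by (simp add: enn2real_eq_0_iff)
    then show ?thesis using IG by simp
  next
    case False
    then have pos: "enn2real I > 0" using enn2real_nonneg[of I] by linarith
    from le a have "ln (enn2real I) \<le> \<epsilon> * (\<alpha> - 1)" by (simp add: pos_divide_le_eq)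
    then have "ln (enn2real I) \<le> (\<alpha> - 1) * \<epsilon>" by (simp add: mult.commute)
    then have "exp (ln (enn2real I)) \<le> exp ((\<alpha> - 1) * \<epsilon>)" by simp
    then have "enn2real I \<le> exp ((\<alpha> - 1) * \<epsilon>)" using pos by simp
    then have "ennreal (enn2real I) \<le> ennreal (exp ((\<alpha> - 1) * \<epsilon>))" by (rule ennreal_leI)
    moreover have "ennreal (enn2real I) = I" using Ifin by (simp add: ennreal_enn2real top.not_eq_extremum)
    ultimately have "I \<le> ennreal (exp ((\<alpha> - 1) * \<epsilon>))" by simp
    then show ?thesis using IG by simp
  qed
qed

lemma imp_renyi_le:
  assumes a: "\<alpha> > 1" and [measurable]: "p \<in> borel_measurable M" "q \<in> borel_measurable M"
    and P: "prob_space (density M p)" and Q: "prob_space (density M q)"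
    and B: "(\<integral>\<^sup>+ x. G \<alpha> (p x) (q x) \<partial>M) \<le> ennreal (exp ((\<alpha> - 1) * \<epsilon>))"
  shows "renyi_div \<alpha> (density M p) (density M q) \<le> ereal \<epsilon>"
proof -
  have fin: "(\<integral>\<^sup>+ x. G \<alpha> (p x) (q x) \<partial>M) \<noteq> \<infinity>"
    using B by (auto simp: top_unique)
  have "AE x in M. G \<alpha> (p x) (q x) \<noteq> \<infinity>"
    using fin by (intro nn_integral_PInf_AE) auto
  then have H: "AE x in M. q x = 0 \<longrightarrow> p x = 0"
    by eventually_elim (auto simp: G_def split: if_splits)
  then have ac: "absolutely_continuous (density M q) (density M p)" by (simp add: ac_density_iff)
  define I where "I = (\<integral>\<^sup>+ x. ennreal ((enn2real (RN_deriv (density M q) (density M p) x)) powr \<alpha>) \<partial>density M q)"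
  have IG: "I = (\<integral>\<^sup>+ x. G \<alpha> (p x) (q x) \<partial>M)"
    unfolding I_def by (rule RN_integral_eq[OF a _ _ P Q H]) auto
  have I0: "I \<noteq> 0"
  proof
    assume "I = 0"
    then have "AE x in M. G \<alpha> (p x) (q x) = 0" using IG by (simp add: nn_integral_0_iff_AE)
    then have "AE x in M. p x = 0" using dens_fin_AE[OF assms(2) P] dens_fin_AE[OF assms(3) Q]
    proof eventually_elim
      case (elim x)
      show ?case
      proof (rule ccontr)
        assume "p x \<noteq> 0"
        moreover have "q x \<noteq> 0" using elim \<open>p x \<noteq> 0\<close> by (auto simp: G_def)
        moreover have "enn2real (p x) > 0" "enn2real (q x) > 0"
          using elim calculation by (auto simp: enn2real_positive_iff top.not_eq_extremum zero_less_iff_neq_zero)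
        ultimately have "G \<alpha> (p x) (q x) > 0" by (simp add: G_def)
        then show False using elim by simp
      qed
    qed
    then have "integral\<^sup>N M p = 0" by (simp add: nn_integral_0_iff_AE)
    then show False using dens_int1[OF assms(2) P] by simp
  qed
  have Ifin: "I \<noteq> \<infinity>" using IG fin by simp
  then have pos: "enn2real I > 0" using I0 by (simp add: enn2real_positive_iff top.not_eq_extremum zero_less_iff_neq_zero)
  have "enn2real I \<le> exp ((\<alpha> - 1) * \<epsilon>)" using B IG Ifin
    using enn2real_mono[of I "ennreal (exp ((\<alpha> - 1) * \<epsilon>))"] B IG by simp
  then have "ln (enn2real I) \<le> ln (exp ((\<alpha> - 1) * \<epsilon>))" using pos by (subst ln_le_cancel_iff) auto
  then have "ln (enn2real I) \<le> (\<alpha> - 1) * \<epsilon>" by simp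
  then have "ln (enn2real I) \<le> \<epsilon> * (\<alpha> - 1)" by (simp add: mult.commute)
  then have "ln (enn2real I) / (\<alpha> - 1) \<le> \<epsilon>" using a by (simp add: pos_divide_le_eq)
  moreover have eq: "renyi_div \<alpha> (density M p) (density M q) = (if I = \<infinity> then \<infinity> else ereal (ln (enn2real I) / (\<alpha> - 1)))"
    using ac unfolding renyi_div_def I_def Let_def by (simp only: sets_density simp_thms if_True)
  ultimately show ?thesis using Ifin by simp
qed

lemma G_scale:
  assumes "c > 0" "d > 0"
  shows "G \<alpha> (ennreal c * x) (ennreal d * y) = ennreal (c powr \<alpha> * d powr (1 - \<alpha>)) * G \<alpha> x y"
proof (cases "x = 0 \<or> y = 0")
  case True then show ?thesis using assms by (auto simp: G_def ennreal_mult_top)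
next
  case False
  then have "ennreal c * x \<noteq> 0" "ennreal d * y \<noteq> 0" using assms by auto
  then show ?thesis using assms False
    by (simp add: G_def enn2real_mult powr_mult ennreal_mult'[symmetric] mult_ac)
qed

lemma meas_app2:
  assumes "case_prod \<beta> \<in> borel_measurable (M1 \<Otimes>\<^sub>M M2)" "f \<in> N \<rightarrow>\<^sub>M M1" "g \<in> N \<rightarrow>\<^sub>M M2"
  shows "(\<lambda>x. \<beta> (f x) (g x)) \<in> borel_measurable N"
  using measurable_compose[OF measurable_Pair[OF assms(2,3)] assms(1)] by simp

lemma powr_ident2:
  fixes U V \<alpha> :: real
  assumes "U > 0" "V > 0"
  shows "(V powr (- \<alpha>) * U powr (\<alpha> - 1)) * (V powr \<alpha> * U powr (1 - \<alpha>)) = 1"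
    and "(V powr (- \<alpha>) * U powr (\<alpha> - 1)) * (U * V) = U powr \<alpha> * V powr (1 - \<alpha>)"
proof -
  have "(V powr (- \<alpha>) * U powr (\<alpha> - 1)) * (V powr \<alpha> * U powr (1 - \<alpha>))
      = (V powr (- \<alpha>) * V powr \<alpha>) * (U powr (\<alpha> - 1) * U powr (1 - \<alpha>))" by (simp add: mult_ac)
  also have "\<dots> = V powr (- \<alpha> + \<alpha>) * U powr (\<alpha> - 1 + (1 - \<alpha>))"
    using assms by (simp only: powr_add)
  also have "\<dots> = 1" using assms by simp
  finally show "(V powr (- \<alpha>) * U powr (\<alpha> - 1)) * (V powr \<alpha> * U powr (1 - \<alpha>)) = 1" .
  have "(V powr (- \<alpha>) * U powr (\<alpha> - 1)) * (U * V)
      = (U powr (\<alpha> - 1) * U powr 1) * (V powr (- \<alpha>) * V powr 1)" using assms by (simp add: mult_ac)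
  also have "\<dots> = U powr (\<alpha> - 1 + 1) * V powr (- \<alpha> + 1)"
    using assms by (simp only: powr_add)
  also have "\<dots> = U powr \<alpha> * V powr (1 - \<alpha>)" by simp
  finally show "(V powr (- \<alpha>) * U powr (\<alpha> - 1)) * (U * V) = U powr \<alpha> * V powr (1 - \<alpha>)" .
qed

lemma mixture_bound:
  fixes u v :: "'b \<Rightarrow> ennreal" and \<beta> :: "'b \<Rightarrow> 'c \<Rightarrow> ennreal" and C :: ennreal
  assumes a: "\<alpha> > 1" and S2: "sigma_finite_measure Z2" and SW: "sigma_finite_measure W"
    and [measurable]: "u \<in> borel_measurable Z2" "v \<in> borel_measurable Z2"
    and bm: "case_prod \<beta> \<in> borel_measurable (Z2 \<Otimes>\<^sub>M W)"
    and int1: "\<And>s. s \<in> space Z2 \<Longrightarrow> (\<integral>\<^sup>+ w. \<beta> s w \<partial>W) = 1"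
    and Cb: "\<And>s t. s \<in> space Z2 \<Longrightarrow> t \<in> space Z2 \<Longrightarrow> (\<integral>\<^sup>+ w. G \<alpha> (\<beta> s w) (\<beta> t w) \<partial>W) \<le> C"
    and Cpos: "C > 0"
    and Ufin: "integral\<^sup>N Z2 u \<noteq> \<infinity>" and Vfin: "integral\<^sup>N Z2 v \<noteq> \<infinity>"
  shows "(\<integral>\<^sup>+ w. G \<alpha> (\<integral>\<^sup>+ s. u s * \<beta> s w \<partial>Z2) (\<integral>\<^sup>+ t. v t * \<beta> t w \<partial>Z2) \<partial>W)
       \<le> C * G \<alpha> (integral\<^sup>N Z2 u) (integral\<^sup>N Z2 v)"
proof -
  have bapp[measurable]: "\<And>N f g. f \<in> N \<rightarrow>\<^sub>M Z2 \<Longrightarrow> g \<in> N \<rightarrow>\<^sub>M W \<Longrightarrow> (\<lambda>x. \<beta> (f x) (g x)) \<in> borel_measurable N"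
    using meas_app2[OF bm] by blast
  interpret Z2: sigma_finite_measure Z2 by fact
  interpret W: sigma_finite_measure W by fact
  interpret ZW: pair_sigma_finite Z2 W by (simp add: pair_sigma_finite_def S2 SW)
  have S22: "sigma_finite_measure (Z2 \<Otimes>\<^sub>M Z2)" by (rule sigma_finite_pair_measure[OF S2 S2])
  interpret ZZW: pair_sigma_finite "Z2 \<Otimes>\<^sub>M Z2" W by (simp add: pair_sigma_finite_def S22 SW)
  define U where "U = integral\<^sup>N Z2 u"
  define V where "V = integral\<^sup>N Z2 v"
  define P where "P w = (\<integral>\<^sup>+ s. u s * \<beta> s w \<partial>Z2)" for w
  define Q where "Q w = (\<integral>\<^sup>+ t. v t * \<beta> t w \<partial>Z2)" for w
  have [measurable]: "P \<in> borel_measurable W" "Q \<in> borel_measurable W"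
    unfolding P_def Q_def by measurable
  consider "U = 0" | "U \<noteq> 0" "V = 0" | "U \<noteq> 0" "V \<noteq> 0" by blast
  then show ?thesis
  proof cases
    case 1
    then have "AE s in Z2. u s = 0" by (simp add: U_def nn_integral_0_iff_AE)
    moreover have m: "(\<lambda>s. u s * \<beta> s w) \<in> borel_measurable Z2" if "w \<in> space W" for w
      using that by measurable
    ultimately have Pz: "P w = 0" if "w \<in> space W" for w unfolding P_def
      by (subst nn_integral_0_iff_AE[OF m[OF that]]) (auto elim: eventually_mono)
    have "(\<integral>\<^sup>+ w. G \<alpha> (P w) (Q w) \<partial>W) = (\<integral>\<^sup>+ w. 0 \<partial>W)"
      by (intro nn_integral_cong) (simp add: Pz G_def)
    then show ?thesis by (simp add: P_def Q_def)
  next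
    case 2
    then have "G \<alpha> U V = \<infinity>" by (simp add: G_def)
    then have "C * G \<alpha> U V = \<infinity>" using Cpos by (simp add: ennreal_mult_top)
    then show ?thesis by (simp add: U_def V_def)
  next
    case 3
    define U' V' where "U' = enn2real U" "V' = enn2real V"
    have UV: "U = ennreal U'" "V = ennreal V'" "U' > 0" "V' > 0"
      using 3 Ufin Vfin by (auto simp: U'_V'_def U_def V_def enn2real_positive_iff ennreal_enn2real_if top.not_eq_extremum zero_less_iff_neq_zero)
    define \<nu> where "\<nu> = density (Z2 \<Otimes>\<^sub>M Z2) (\<lambda>x. u (fst x) * v (snd x))"
    have int_prod: "(\<integral>\<^sup>+ x. f (fst x) * g (snd x) \<partial>(Z2 \<Otimes>\<^sub>M Z2)) = integral\<^sup>N Z2 f * integral\<^sup>N Z2 g"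
      if [measurable]: "f \<in> borel_measurable Z2" "g \<in> borel_measurable Z2" for f g
    proof -
      have "(\<integral>\<^sup>+ x. f (fst x) * g (snd x) \<partial>(Z2 \<Otimes>\<^sub>M Z2)) = (\<integral>\<^sup>+ s. \<integral>\<^sup>+ t. f s * g t \<partial>Z2 \<partial>Z2)"
        by (subst Z2.nn_integral_fst[symmetric]) auto
      also have "\<dots> = (\<integral>\<^sup>+ s. f s * integral\<^sup>N Z2 g \<partial>Z2)"
        by (simp add: nn_integral_cmult)
      also have "\<dots> = integral\<^sup>N Z2 f * integral\<^sup>N Z2 g"
        by (simp add: nn_integral_multc)
      finally show ?thesis .
    qed
    have intP: "integral\<^sup>N W P = U"
    proof -
      have "integral\<^sup>N W P = (\<integral>\<^sup>+ s. \<integral>\<^sup>+ w. u s * \<beta> s w \<partial>W \<partial>Z2)"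
        unfolding P_def by (rule ZW.Fubini') measurable
      also have "\<dots> = (\<integral>\<^sup>+ s. u s * (\<integral>\<^sup>+ w. \<beta> s w \<partial>W) \<partial>Z2)"
        by (intro nn_integral_cong) (simp add: nn_integral_cmult)
      also have "\<dots> = U" unfolding U_def
        by (intro nn_integral_cong) (simp add: int1)
      finally show ?thesis .
    qed
    have intQ: "integral\<^sup>N W Q = V"
    proof -
      have "integral\<^sup>N W Q = (\<integral>\<^sup>+ s. \<integral>\<^sup>+ w. v s * \<beta> s w \<partial>W \<partial>Z2)"
        unfolding Q_def by (rule ZW.Fubini') measurable
      also have "\<dots> = (\<integral>\<^sup>+ s. v s * (\<integral>\<^sup>+ w. \<beta> s w \<partial>W) \<partial>Z2)"
        by (intro nn_integral_cong) (simp add: nn_integral_cmult)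
      also have "\<dots> = V" unfolding V_def
        by (intro nn_integral_cong) (simp add: int1)
      finally show ?thesis .
    qed
    have Pfin: "AE w in W. P w \<noteq> \<infinity>"
      using intP UV by (intro nn_integral_PInf_AE) auto
    have Qfin: "AE w in W. Q w \<noteq> \<infinity>"
      using intQ UV by (intro nn_integral_PInf_AE) auto
    define k where "k = V' powr (- \<alpha>) * U' powr (\<alpha> - 1)"
    have k: "k > 0" using UV by (simp add: k_def)
    define H where "H w = (\<integral>\<^sup>+ x. G \<alpha> (\<beta> (fst x) w) (\<beta> (snd x) w) \<partial>\<nu>)" for w
    have pw: "G \<alpha> (P w) (Q w) \<le> ennreal k * H w" if fin: "P w \<noteq> \<infinity>" "Q w \<noteq> \<infinity>" and w: "w \<in> space W" for w
    proof -
      have mb[measurable]: "(\<lambda>x. \<beta> (fst x) w) \<in> borel_measurable (Z2 \<Otimes>\<^sub>M Z2)"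
        "(\<lambda>x. \<beta> (snd x) w) \<in> borel_measurable (Z2 \<Otimes>\<^sub>M Z2)"
        "(\<lambda>s. \<beta> s w) \<in> borel_measurable Z2"
        using w by measurable
      have eX: "(\<integral>\<^sup>+ x. \<beta> (fst x) w \<partial>\<nu>) = ennreal V' * P w"
      proof -
        have "(\<integral>\<^sup>+ x. \<beta> (fst x) w \<partial>\<nu>) = (\<integral>\<^sup>+ x. (u (fst x) * \<beta> (fst x) w) * v (snd x) \<partial>(Z2 \<Otimes>\<^sub>M Z2))"
          unfolding \<nu>_def by (subst nn_integral_density) (auto simp: mult_ac)
        also have "\<dots> = P w * V" unfolding P_def V_def by (rule int_prod) auto
        finally show ?thesis using UV by (simp add: mult_ac)
      qed
      have eY: "(\<integral>\<^sup>+ x. \<beta> (snd x) w \<partial>\<nu>) = ennreal U' * Q w"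
      proof -
        have "(\<integral>\<^sup>+ x. \<beta> (snd x) w \<partial>\<nu>) = (\<integral>\<^sup>+ x. u (fst x) * (v (snd x) * \<beta> (snd x) w) \<partial>(Z2 \<Otimes>\<^sub>M Z2))"
          unfolding \<nu>_def by (subst nn_integral_density) (auto simp: mult_ac)
        also have "\<dots> = U * Q w" unfolding Q_def U_def by (rule int_prod) auto
        finally show ?thesis using UV by (simp add: mult_ac)
      qed
      have "G \<alpha> (ennreal V' * P w) (ennreal U' * Q w) \<le> H w"
        unfolding H_def eX[symmetric] eY[symmetric]
      proof (rule G_jensen[OF a])
        show "(\<lambda>x. \<beta> (fst x) w) \<in> borel_measurable \<nu>" "(\<lambda>x. \<beta> (snd x) w) \<in> borel_measurable \<nu>"
          unfolding \<nu>_def using mb by auto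
      qed (use fin in \<open>auto simp: eX eY ennreal_mult_eq_top_iff\<close>)
      then have "ennreal (V' powr \<alpha> * U' powr (1 - \<alpha>)) * G \<alpha> (P w) (Q w) \<le> H w"
        using UV by (simp add: G_scale)
      then have "ennreal k * (ennreal (V' powr \<alpha> * U' powr (1 - \<alpha>)) * G \<alpha> (P w) (Q w)) \<le> ennreal k * H w"
        by (rule mult_left_mono) simp
      also have "ennreal k * (ennreal (V' powr \<alpha> * U' powr (1 - \<alpha>)) * G \<alpha> (P w) (Q w)) = G \<alpha> (P w) (Q w)"
        using powr_ident2(1)[OF UV(3,4), of \<alpha>] k UV
        by (simp add: mult.assoc[symmetric] ennreal_mult'[symmetric] k_def)
      finally show ?thesis .
    qed
    have "(\<integral>\<^sup>+ w. G \<alpha> (P w) (Q w) \<partial>W) \<le> (\<integral>\<^sup>+ w. ennreal k * H w \<partial>W)"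
    proof (intro nn_integral_mono_AE)
      show "AE w in W. G \<alpha> (P w) (Q w) \<le> ennreal k * H w"
        using Pfin Qfin AE_space by eventually_elim (rule pw)
    qed
    also have "\<dots> = (\<integral>\<^sup>+ w. ennreal k * (\<integral>\<^sup>+ x. u (fst x) * v (snd x) * G \<alpha> (\<beta> (fst x) w) (\<beta> (snd x) w) \<partial>(Z2 \<Otimes>\<^sub>M Z2)) \<partial>W)"
    proof (intro nn_integral_cong)
      fix w assume w: "w \<in> space W"
      have [measurable]: "(\<lambda>x. G \<alpha> (\<beta> (fst x) w) (\<beta> (snd x) w)) \<in> borel_measurable (Z2 \<Otimes>\<^sub>M Z2)"
        using w by measurable
      show "ennreal k * H w = ennreal k * (\<integral>\<^sup>+ x. u (fst x) * v (snd x) * G \<alpha> (\<beta> (fst x) w) (\<beta> (snd x) w) \<partial>(Z2 \<Otimes>\<^sub>M Z2))"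
        unfolding H_def \<nu>_def by (subst nn_integral_density) auto
    qed
    also have "\<dots> = ennreal k * (\<integral>\<^sup>+ w. \<integral>\<^sup>+ x. u (fst x) * v (snd x) * G \<alpha> (\<beta> (fst x) w) (\<beta> (snd x) w) \<partial>(Z2 \<Otimes>\<^sub>M Z2) \<partial>W)"
    proof (rule nn_integral_cmult)
      show "(\<lambda>w. \<integral>\<^sup>+ x. u (fst x) * v (snd x) * G \<alpha> (\<beta> (fst x) w) (\<beta> (snd x) w) \<partial>(Z2 \<Otimes>\<^sub>M Z2)) \<in> borel_measurable W"
        by (rule sigma_finite_measure.borel_measurable_nn_integral[OF S22]) measurable
    qed
    finally have A: "(\<integral>\<^sup>+ w. G \<alpha> (P w) (Q w) \<partial>W) \<le> ennreal k * (\<integral>\<^sup>+ w. \<integral>\<^sup>+ x. u (fst x) * v (snd x) * G \<alpha> (\<beta> (fst x) w) (\<beta> (snd x) w) \<partial>(Z2 \<Otimes>\<^sub>M Z2) \<partial>W)" .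
    have "(\<integral>\<^sup>+ w. \<integral>\<^sup>+ x. u (fst x) * v (snd x) * G \<alpha> (\<beta> (fst x) w) (\<beta> (snd x) w) \<partial>(Z2 \<Otimes>\<^sub>M Z2) \<partial>W) = (\<integral>\<^sup>+ x. \<integral>\<^sup>+ w. u (fst x) * v (snd x) * G \<alpha> (\<beta> (fst x) w) (\<beta> (snd x) w) \<partial>W \<partial>(Z2 \<Otimes>\<^sub>M Z2))"
      by (rule ZZW.Fubini') measurable
    also have "\<dots> \<le> (\<integral>\<^sup>+ x. u (fst x) * v (snd x) * C \<partial>(Z2 \<Otimes>\<^sub>M Z2))"
    proof (intro nn_integral_mono)
      fix x assume x: "x \<in> space (Z2 \<Otimes>\<^sub>M Z2)"
      have "(\<integral>\<^sup>+ w. u (fst x) * v (snd x) * G \<alpha> (\<beta> (fst x) w) (\<beta> (snd x) w) \<partial>W)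
          = u (fst x) * v (snd x) * (\<integral>\<^sup>+ w. G \<alpha> (\<beta> (fst x) w) (\<beta> (snd x) w) \<partial>W)"
        using x by (subst nn_integral_cmult) (auto simp: space_pair_measure)
      also have "\<dots> \<le> u (fst x) * v (snd x) * C"
        using x by (intro mult_left_mono Cb) (auto simp: space_pair_measure)
      finally show "(\<integral>\<^sup>+ w. u (fst x) * v (snd x) * G \<alpha> (\<beta> (fst x) w) (\<beta> (snd x) w) \<partial>W) \<le> u (fst x) * v (snd x) * C" .
    qed
    also have "\<dots> = U * V * C"
      by (subst nn_integral_multc) (auto simp: int_prod U_def V_def)
    finally have "(\<integral>\<^sup>+ w. \<integral>\<^sup>+ x. u (fst x) * v (snd x) * G \<alpha> (\<beta> (fst x) w) (\<beta> (snd x) w) \<partial>(Z2 \<Otimes>\<^sub>M Z2) \<partial>W) \<le> U * V * C" .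
    then have "ennreal k * (\<integral>\<^sup>+ w. \<integral>\<^sup>+ x. u (fst x) * v (snd x) * G \<alpha> (\<beta> (fst x) w) (\<beta> (snd x) w) \<partial>(Z2 \<Otimes>\<^sub>M Z2) \<partial>W) \<le> ennreal k * (U * V * C)"
      by (rule mult_left_mono) simp
    with A have "(\<integral>\<^sup>+ w. G \<alpha> (P w) (Q w) \<partial>W) \<le> ennreal k * (U * V * C)"
      by (rule order_trans)
    also have "ennreal k * (U * V * C) = C * ennreal (k * (U' * V'))"
      using UV k by (simp add: ennreal_mult'[symmetric] mult_ac)
    also have "k * (U' * V') = U' powr \<alpha> * V' powr (1 - \<alpha>)"
      unfolding k_def by (rule powr_ident2(2)[OF UV(3,4)])
    also have "ennreal (U' powr \<alpha> * V' powr (1 - \<alpha>)) = G \<alpha> U V"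
      using UV by (simp add: G_def)
    finally show ?thesis by (simp add: P_def Q_def U_def V_def)
  qed
qed

lemma meas_app2':
  assumes "case_prod \<beta> \<in> borel_measurable (M1 \<Otimes>\<^sub>M M2)" "f \<in> N \<rightarrow>\<^sub>M M1" "g \<in> N \<rightarrow>\<^sub>M M2"
  shows "(\<lambda>x. \<beta> (f x) (g x)) \<in> borel_measurable N"
  using measurable_compose[OF measurable_Pair[OF assms(2,3)] assms(1)] by simp

lemma distr_fst_density:
  assumes S2: "sigma_finite_measure Z2" and [measurable]: "a \<in> borel_measurable (Z1 \<Otimes>\<^sub>M Z2)"
  shows "distr (density (Z1 \<Otimes>\<^sub>M Z2) a) Z1 fst = density Z1 (\<lambda>z1. \<integral>\<^sup>+ z2. a (z1, z2) \<partial>Z2)"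
proof (rule measure_eqI)
  interpret Z2: sigma_finite_measure Z2 by fact
  show "sets (distr (density (Z1 \<Otimes>\<^sub>M Z2) a) Z1 fst) = sets (density Z1 (\<lambda>z1. \<integral>\<^sup>+ z2. a (z1, z2) \<partial>Z2))"
    by simp
  fix S assume "S \<in> sets (distr (density (Z1 \<Otimes>\<^sub>M Z2) a) Z1 fst)"
  then have S[measurable]: "S \<in> sets Z1" by simp
  have "emeasure (distr (density (Z1 \<Otimes>\<^sub>M Z2) a) Z1 fst) S
      = emeasure (density (Z1 \<Otimes>\<^sub>M Z2) a) (fst -` S \<inter> space (Z1 \<Otimes>\<^sub>M Z2))"
    by (subst emeasure_distr) auto
  also have "\<dots> = (\<integral>\<^sup>+ z. a z * indicator (fst -` S \<inter> space (Z1 \<Otimes>\<^sub>M Z2)) z \<partial>(Z1 \<Otimes>\<^sub>M Z2))"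
    by (subst emeasure_density) auto
  also have "\<dots> = (\<integral>\<^sup>+ z. a z * indicator S (fst z) \<partial>(Z1 \<Otimes>\<^sub>M Z2))"
    by (intro nn_integral_cong) (auto simp: indicator_def)
  also have "\<dots> = (\<integral>\<^sup>+ z1. \<integral>\<^sup>+ z2. a (z1, z2) * indicator S z1 \<partial>Z2 \<partial>Z1)"
    by (subst Z2.nn_integral_fst[symmetric]) auto
  also have "\<dots> = (\<integral>\<^sup>+ z1. (\<integral>\<^sup>+ z2. a (z1, z2) \<partial>Z2) * indicator S z1 \<partial>Z1)"
    by (intro nn_integral_cong) (simp add: nn_integral_multc)
  also have "\<dots> = emeasure (density Z1 (\<lambda>z1. \<integral>\<^sup>+ z2. a (z1, z2) \<partial>Z2)) S"
    by (subst emeasure_density) auto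
  finally show "emeasure (distr (density (Z1 \<Otimes>\<^sub>M Z2) a) Z1 fst) S = emeasure (density Z1 (\<lambda>z1. \<integral>\<^sup>+ z2. a (z1, z2) \<partial>Z2)) S" .
qed

lemma bind_density:
  fixes a :: "'z1 \<times> 'z2 \<Rightarrow> ennreal" and B :: "'z1 \<times> 'z2 \<Rightarrow> 'w measure"
    and b :: "'z1 \<times> 'z2 \<Rightarrow> 'w \<Rightarrow> ennreal"
  assumes S2: "sigma_finite_measure Z2" and SW: "sigma_finite_measure W"
    and am[measurable]: "a \<in> borel_measurable (Z1 \<Otimes>\<^sub>M Z2)"
    and Aprob: "prob_space (density (Z1 \<Otimes>\<^sub>M Z2) a)"
    and Bk[measurable]: "B \<in> Z1 \<Otimes>\<^sub>M Z2 \<rightarrow>\<^sub>M prob_algebra W"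
    and Bd: "\<And>z. z \<in> space (Z1 \<Otimes>\<^sub>M Z2) \<Longrightarrow> B z = density W (b z)"
    and bm: "case_prod b \<in> borel_measurable ((Z1 \<Otimes>\<^sub>M Z2) \<Otimes>\<^sub>M W)"
  shows "density (Z1 \<Otimes>\<^sub>M Z2) a \<bind> (\<lambda>z. B z \<bind> (\<lambda>w. return (Z1 \<Otimes>\<^sub>M W) (fst z, w)))
      = density (Z1 \<Otimes>\<^sub>M W) (\<lambda>x. \<integral>\<^sup>+ z2. a (fst x, z2) * b (fst x, z2) (snd x) \<partial>Z2)"
    (is "?L = ?R")
  and "prob_space (density (Z1 \<Otimes>\<^sub>M W) (\<lambda>x. \<integral>\<^sup>+ z2. a (fst x, z2) * b (fst x, z2) (snd x) \<partial>Z2))"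
proof -
  have bapp[measurable]: "\<And>N f g. f \<in> N \<rightarrow>\<^sub>M Z1 \<Otimes>\<^sub>M Z2 \<Longrightarrow> g \<in> N \<rightarrow>\<^sub>M W \<Longrightarrow> (\<lambda>x. b (f x) (g x)) \<in> borel_measurable N"
    using meas_app2'[OF bm] by blast
  interpret Z2: sigma_finite_measure Z2 by fact
  interpret W: sigma_finite_measure W by fact
  interpret ZW: pair_sigma_finite Z2 W by (simp add: pair_sigma_finite_def S2 SW)
  define A where "A = density (Z1 \<Otimes>\<^sub>M Z2) a"
  define K where "K z = B z \<bind> (\<lambda>w. return (Z1 \<Otimes>\<^sub>M W) (fst z, w))" for z
  define pj where "pj x = (\<integral>\<^sup>+ z2. a (fst x, z2) * b (fst x, z2) (snd x) \<partial>Z2)" for x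
  have Asp: "A \<in> space (prob_algebra (Z1 \<Otimes>\<^sub>M Z2))"
    by (simp add: space_prob_algebra A_def Aprob)
  have Kk: "K \<in> Z1 \<Otimes>\<^sub>M Z2 \<rightarrow>\<^sub>M prob_algebra (Z1 \<Otimes>\<^sub>M W)"
    unfolding K_def by measurable
  have pjm[measurable]: "pj \<in> borel_measurable (Z1 \<Otimes>\<^sub>M W)"
    unfolding pj_def by (rule sigma_finite_measure.borel_measurable_nn_integral[OF S2]) measurable
  have Kz: "emeasure (K z) S = (\<integral>\<^sup>+ w. b z w * indicator S (fst z, w) \<partial>W)"
    if z: "z \<in> space (Z1 \<Otimes>\<^sub>M Z2)" and S[measurable]: "S \<in> sets (Z1 \<Otimes>\<^sub>M W)" for z S
  proof -
    have fz[measurable]: "fst z \<in> space Z1" using z by (auto simp: space_pair_measure)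
    have Bz: "B z \<in> space (prob_algebra W)" using measurable_space[OF Bk z] .
    have Rk: "(\<lambda>w. return (Z1 \<Otimes>\<^sub>M W) (fst z, w)) \<in> W \<rightarrow>\<^sub>M prob_algebra (Z1 \<Otimes>\<^sub>M W)"
      by measurable
    have bz[measurable]: "b z \<in> borel_measurable W"
      using z by measurable
    have "emeasure (K z) S = (\<integral>\<^sup>+ w. emeasure (return (Z1 \<Otimes>\<^sub>M W) (fst z, w)) S \<partial>B z)"
      unfolding K_def by (rule emeasure_bind_prob_algebra[OF Bz Rk S])
    also have "\<dots> = (\<integral>\<^sup>+ w. indicator S (fst z, w) \<partial>density W (b z))"
      by (simp add: Bd[OF z])
    also have "\<dots> = (\<integral>\<^sup>+ w. b z w * indicator S (fst z, w) \<partial>W)"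
      by (subst nn_integral_density) auto
    finally show ?thesis .
  qed
  show eq: "?L = ?R"
    unfolding A_def[symmetric] K_def[symmetric] pj_def[symmetric]
  proof (rule measure_eqI)
    show "sets (A \<bind> K) = sets (density (Z1 \<Otimes>\<^sub>M W) pj)"
      using sets_bind'[OF Asp Kk] by simp
    fix S assume "S \<in> sets (A \<bind> K)"
    then have S[measurable]: "S \<in> sets (Z1 \<Otimes>\<^sub>M W)" using sets_bind'[OF Asp Kk] by simp
    have "emeasure (A \<bind> K) S = (\<integral>\<^sup>+ z. emeasure (K z) S \<partial>A)"
      by (rule emeasure_bind_prob_algebra[OF Asp Kk S])
    also have "\<dots> = (\<integral>\<^sup>+ z. (\<integral>\<^sup>+ w. b z w * indicator S (fst z, w) \<partial>W) \<partial>A)"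
      by (intro nn_integral_cong) (simp add: Kz A_def)
    also have "\<dots> = (\<integral>\<^sup>+ z. a z * (\<integral>\<^sup>+ w. b z w * indicator S (fst z, w) \<partial>W) \<partial>(Z1 \<Otimes>\<^sub>M Z2))"
      unfolding A_def
    proof (rule nn_integral_density)
      show "(\<lambda>z. \<integral>\<^sup>+ w. b z w * indicator S (fst z, w) \<partial>W) \<in> borel_measurable (Z1 \<Otimes>\<^sub>M Z2)"
        by (rule sigma_finite_measure.borel_measurable_nn_integral[OF SW]) measurable
    qed simp
    also have "\<dots> = (\<integral>\<^sup>+ z1. \<integral>\<^sup>+ z2. a (z1, z2) * (\<integral>\<^sup>+ w. b (z1, z2) w * indicator S (z1, w) \<partial>W) \<partial>Z2 \<partial>Z1)"
    proof (subst Z2.nn_integral_fst[symmetric])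
      show "(\<lambda>z. a z * (\<integral>\<^sup>+ w. b z w * indicator S (fst z, w) \<partial>W)) \<in> borel_measurable (Z1 \<Otimes>\<^sub>M Z2)"
        by (intro borel_measurable_times_ennreal am sigma_finite_measure.borel_measurable_nn_integral[OF SW]) measurable
    qed simp
    also have "\<dots> = (\<integral>\<^sup>+ z1. \<integral>\<^sup>+ w. pj (z1, w) * indicator S (z1, w) \<partial>W \<partial>Z1)"
    proof (intro nn_integral_cong)
      fix z1 assume z1[measurable]: "z1 \<in> space Z1"
      have "(\<integral>\<^sup>+ z2. a (z1, z2) * (\<integral>\<^sup>+ w. b (z1, z2) w * indicator S (z1, w) \<partial>W) \<partial>Z2)
          = (\<integral>\<^sup>+ z2. \<integral>\<^sup>+ w. a (z1, z2) * (b (z1, z2) w * indicator S (z1, w)) \<partial>W \<partial>Z2)"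
      proof (intro nn_integral_cong)
        fix z2 assume z2[measurable]: "z2 \<in> space Z2"
        show "a (z1, z2) * (\<integral>\<^sup>+ w. b (z1, z2) w * indicator S (z1, w) \<partial>W) = (\<integral>\<^sup>+ w. a (z1, z2) * (b (z1, z2) w * indicator S (z1, w)) \<partial>W)"
          by (subst nn_integral_cmult) measurable
      qed
      also have "\<dots> = (\<integral>\<^sup>+ w. \<integral>\<^sup>+ z2. a (z1, z2) * (b (z1, z2) w * indicator S (z1, w)) \<partial>Z2 \<partial>W)"
        by (rule ZW.Fubini'[symmetric]) measurable
      also have "\<dots> = (\<integral>\<^sup>+ w. pj (z1, w) * indicator S (z1, w) \<partial>W)"
      proof (intro nn_integral_cong)
        fix w assume w[measurable]: "w \<in> space W"
        show "(\<integral>\<^sup>+ z2. a (z1, z2) * (b (z1, z2) w * indicator S (z1, w)) \<partial>Z2) = pj (z1, w) * indicator S (z1, w)"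
          unfolding pj_def by (subst nn_integral_multc[symmetric]) (measurable, simp add: mult_ac)
      qed
      finally show "(\<integral>\<^sup>+ z2. a (z1, z2) * (\<integral>\<^sup>+ w. b (z1, z2) w * indicator S (z1, w) \<partial>W) \<partial>Z2)
          = (\<integral>\<^sup>+ w. pj (z1, w) * indicator S (z1, w) \<partial>W)" .
    qed
    also have "\<dots> = (\<integral>\<^sup>+ x. pj x * indicator S x \<partial>(Z1 \<Otimes>\<^sub>M W))"
      by (rule W.nn_integral_fst) measurable
    also have "\<dots> = emeasure (density (Z1 \<Otimes>\<^sub>M W) pj) S"
      by (subst emeasure_density) auto
    finally show "emeasure (A \<bind> K) S = emeasure (density (Z1 \<Otimes>\<^sub>M W) pj) S" .
  qed
  show "prob_space (density (Z1 \<Otimes>\<^sub>M W) (\<lambda>x. \<integral>\<^sup>+ z2. a (fst x, z2) * b (fst x, z2) (snd x) \<partial>Z2))"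
  proof -
    have "K = (\<lambda>z. B z \<bind> (\<lambda>w. return (Z1 \<Otimes>\<^sub>M W) (fst z, w)))" by (simp add: K_def fun_eq_iff)
    then show ?thesis using eq[symmetric] prob_space_bind'[OF Asp Kk] by (simp add: A_def)
  qed
qed

theorem theoremB1:
  fixes \<alpha> \<epsilon>1 \<epsilon>2 :: real
    and adj :: "'d \<Rightarrow> 'd \<Rightarrow> bool"
    and Z1 :: "'z1 measure" and Z2 :: "'z2 measure" and W :: "'w measure"
    and A :: "'d \<Rightarrow> ('z1 \<times> 'z2) measure"
    and a :: "'d \<Rightarrow> 'z1 \<times> 'z2 \<Rightarrow> ennreal"
    and B :: "'z1 \<times> 'z2 \<Rightarrow> 'w measure"
    and b :: "'z1 \<times> 'z2 \<Rightarrow> 'w \<Rightarrow> ennreal"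
  assumes alpha: "\<alpha> > 1"
    and adj_sym: "\<And>D D'. adj D D' \<Longrightarrow> adj D' D"
    and Z1: "sigma_finite_measure Z1" and Z2: "sigma_finite_measure Z2"
    and W: "sigma_finite_measure W"
    and A_prob: "\<And>D. prob_space (A D)"
    and A_dens: "\<And>D. A D = density (Z1 \<Otimes>\<^sub>M Z2) (a D)"
    and a_meas: "\<And>D. a D \<in> borel_measurable (Z1 \<Otimes>\<^sub>M Z2)"
    and B_kernel: "B \<in> Z1 \<Otimes>\<^sub>M Z2 \<rightarrow>\<^sub>M prob_algebra W"
    and B_dens: "\<And>z. z \<in> space (Z1 \<Otimes>\<^sub>M Z2) \<Longrightarrow> B z = density W (b z)"
    and b_meas: "case_prod b \<in> borel_measurable ((Z1 \<Otimes>\<^sub>M Z2) \<Otimes>\<^sub>M W)"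
    and A1_rdp: "\<And>D D'. adj D D' \<Longrightarrow>
        renyi_div \<alpha> (distr (A D) Z1 fst) (distr (A D') Z1 fst) \<le> ereal \<epsilon>1"
    and B_rdp: "\<And>z1 z2 z2'. z1 \<in> space Z1 \<Longrightarrow> z2 \<in> space Z2 \<Longrightarrow> z2' \<in> space Z2 \<Longrightarrow>
        renyi_div \<alpha> (B (z1, z2)) (B (z1, z2')) \<le> ereal \<epsilon>2"
  shows "\<And>D D'. adj D D' \<Longrightarrow>
      renyi_div \<alpha>
        (A D \<bind> (\<lambda>z. B z \<bind> (\<lambda>w. return (Z1 \<Otimes>\<^sub>M W) (fst z, w))))
        (A D' \<bind> (\<lambda>z. B z \<bind> (\<lambda>w. return (Z1 \<Otimes>\<^sub>M W) (fst z, w))))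
      \<le> ereal (\<epsilon>1 + \<epsilon>2)"
proof -
  have bapp[measurable]: "\<And>N f g. f \<in> N \<rightarrow>\<^sub>M Z1 \<Otimes>\<^sub>M Z2 \<Longrightarrow> g \<in> N \<rightarrow>\<^sub>M W \<Longrightarrow> (\<lambda>x. b (f x) (g x)) \<in> borel_measurable N"
    using meas_app2'[OF b_meas] by blast
  have am[measurable]: "\<And>D. a D \<in> borel_measurable (Z1 \<Otimes>\<^sub>M Z2)" by (rule a_meas)
  interpret Z2: sigma_finite_measure Z2 by fact
  interpret W: sigma_finite_measure W by fact
  have PD: "prob_space (density (Z1 \<Otimes>\<^sub>M Z2) (a D))" for D using A_prob[of D] A_dens[of D] by simp
  define p1 where "p1 D z1 = (\<integral>\<^sup>+ z2. a D (z1, z2) \<partial>Z2)" for D z1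
  define pj where "pj D x = (\<integral>\<^sup>+ z2. a D (fst x, z2) * b (fst x, z2) (snd x) \<partial>Z2)" for D x
  have p1m[measurable]: "p1 D \<in> borel_measurable Z1" for D
    unfolding p1_def by (rule sigma_finite_measure.borel_measurable_nn_integral[OF Z2]) measurable
  have pjm[measurable]: "pj D \<in> borel_measurable (Z1 \<Otimes>\<^sub>M W)" for D
    unfolding pj_def by (rule sigma_finite_measure.borel_measurable_nn_integral[OF Z2]) measurable
  have J: "A D \<bind> (\<lambda>z. B z \<bind> (\<lambda>w. return (Z1 \<Otimes>\<^sub>M W) (fst z, w))) = density (Z1 \<Otimes>\<^sub>M W) (pj D)" for D
    unfolding A_dens[of D] pj_def[abs_def]
    by (rule bind_density(1)[OF Z2 W am PD B_kernel B_dens b_meas])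
  have PJ: "prob_space (density (Z1 \<Otimes>\<^sub>M W) (pj D))" for D
    unfolding pj_def[abs_def]
    by (rule bind_density(2)[OF Z2 W am PD B_kernel B_dens b_meas])
  have M1: "distr (A D) Z1 fst = density Z1 (p1 D)" for D
    unfolding A_dens[of D] p1_def[abs_def] by (rule distr_fst_density[OF Z2 am])
  have P1: "prob_space (density Z1 (p1 D))" for D
  proof -
    have "fst \<in> measurable (A D) Z1" unfolding A_dens[of D] by simp
    from prob_space.prob_space_distr[OF A_prob this] show ?thesis by (simp add: M1)
  qed
  have Bprob: "prob_space (density W (b z))" if "z \<in> space (Z1 \<Otimes>\<^sub>M Z2)" for z
    using measurable_space[OF B_kernel that] B_dens[OF that] by (simp add: space_prob_algebra)
  define C1 where "C1 = ennreal (exp ((\<alpha> - 1) * \<epsilon>1))"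
  define C2 where "C2 = ennreal (exp ((\<alpha> - 1) * \<epsilon>2))"
  have main: "renyi_div \<alpha> (A D \<bind> (\<lambda>z. B z \<bind> (\<lambda>w. return (Z1 \<Otimes>\<^sub>M W) (fst z, w))))
        (A D' \<bind> (\<lambda>z. B z \<bind> (\<lambda>w. return (Z1 \<Otimes>\<^sub>M W) (fst z, w)))) \<le> ereal (\<epsilon>1 + \<epsilon>2)"
    if adj: "adj D D'" for D D'
  proof -
    have bound1: "(\<integral>\<^sup>+ z1. G \<alpha> (p1 D z1) (p1 D' z1) \<partial>Z1) \<le> C1"
      unfolding C1_def
      by (rule renyi_le_imp[OF alpha p1m p1m P1 P1]) (use A1_rdp[OF adj] in \<open>simp add: M1\<close>)
    have inner: "(\<integral>\<^sup>+ w. G \<alpha> (pj D (z1, w)) (pj D' (z1, w)) \<partial>W) \<le> C2 * G \<alpha> (p1 D z1) (p1 D' z1)"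
      if z1[measurable]: "z1 \<in> space Z1" and f1: "p1 D z1 \<noteq> \<infinity>" and f2: "p1 D' z1 \<noteq> \<infinity>" for z1
    proof -
      have bz: "b (z1, s) \<in> borel_measurable W" if s: "s \<in> space Z2" for s
      proof -
        have zs: "(z1, s) \<in> space (Z1 \<Otimes>\<^sub>M Z2)" using z1 s by (simp add: space_pair_measure)
        show ?thesis using meas_app2'[OF b_meas measurable_const[OF zs] measurable_id] by simp
      qed
      have "(\<integral>\<^sup>+ w. G \<alpha> (\<integral>\<^sup>+ s. a D (z1, s) * b (z1, s) w \<partial>Z2) (\<integral>\<^sup>+ t. a D' (z1, t) * b (z1, t) w \<partial>Z2) \<partial>W)
          \<le> C2 * G \<alpha> (\<integral>\<^sup>+ s. a D (z1, s) \<partial>Z2) (\<integral>\<^sup>+ s. a D' (z1, s) \<partial>Z2)"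
      proof (rule mixture_bound[OF alpha Z2 W])
        show "case_prod (\<lambda>s w. b (z1, s) w) \<in> borel_measurable (Z2 \<Otimes>\<^sub>M W)" by measurable
        show "(\<integral>\<^sup>+ w. b (z1, s) w \<partial>W) = 1" if s: "s \<in> space Z2" for s
        proof (rule dens_int1)
          show "prob_space (density W (b (z1, s)))" using s z1 by (intro Bprob) (simp add: space_pair_measure)
          show "b (z1, s) \<in> borel_measurable W" using bz s by blast
        qed
        show "(\<integral>\<^sup>+ w. G \<alpha> (b (z1, s) w) (b (z1, t) w) \<partial>W) \<le> C2"
          if s: "s \<in> space Z2" and t: "t \<in> space Z2" for s t
          unfolding C2_def
        proof (rule renyi_le_imp[OF alpha])
          show "prob_space (density W (b (z1, s)))" "prob_space (density W (b (z1, t)))"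
            using s t z1 by (auto intro!: Bprob simp: space_pair_measure)
          show "renyi_div \<alpha> (density W (b (z1, s))) (density W (b (z1, t))) \<le> ereal \<epsilon>2"
            using B_rdp[OF z1 s t] s t z1 by (simp add: B_dens space_pair_measure)
          show "b (z1, s) \<in> borel_measurable W" "b (z1, t) \<in> borel_measurable W" using bz s t by blast+
        qed
        show "C2 > 0" by (simp add: C2_def)
        show "(\<integral>\<^sup>+ s. a D (z1, s) \<partial>Z2) \<noteq> \<infinity>" "(\<integral>\<^sup>+ s. a D' (z1, s) \<partial>Z2) \<noteq> \<infinity>"
          using f1 f2 by (simp_all add: p1_def)
        show "(\<lambda>s. a D (z1, s)) \<in> borel_measurable Z2" "(\<lambda>s. a D' (z1, s)) \<in> borel_measurable Z2"
          by measurable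
      qed
      then show ?thesis by (simp add: pj_def p1_def)
    qed
    have "(\<integral>\<^sup>+ x. G \<alpha> (pj D x) (pj D' x) \<partial>(Z1 \<Otimes>\<^sub>M W))
        = (\<integral>\<^sup>+ z1. \<integral>\<^sup>+ w. G \<alpha> (pj D (z1, w)) (pj D' (z1, w)) \<partial>W \<partial>Z1)"
      by (rule W.nn_integral_fst[symmetric]) measurable
    also have "\<dots> \<le> (\<integral>\<^sup>+ z1. C2 * G \<alpha> (p1 D z1) (p1 D' z1) \<partial>Z1)"
    proof (rule nn_integral_mono_AE)
      show "AE z1 in Z1. (\<integral>\<^sup>+ w. G \<alpha> (pj D (z1, w)) (pj D' (z1, w)) \<partial>W) \<le> C2 * G \<alpha> (p1 D z1) (p1 D' z1)"
        using dens_fin_AE[OF p1m P1, of D] dens_fin_AE[OF p1m P1, of D'] AE_space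
        by eventually_elim (rule inner)
    qed
    also have "\<dots> = C2 * (\<integral>\<^sup>+ z1. G \<alpha> (p1 D z1) (p1 D' z1) \<partial>Z1)"
      by (rule nn_integral_cmult) measurable
    also have "\<dots> \<le> C2 * C1"
      by (rule mult_left_mono[OF bound1]) simp
    also have "\<dots> = ennreal (exp ((\<alpha> - 1) * (\<epsilon>1 + \<epsilon>2)))"
      by (simp add: C1_def C2_def ennreal_mult'[symmetric] exp_add[symmetric] algebra_simps)
    finally have "(\<integral>\<^sup>+ x. G \<alpha> (pj D x) (pj D' x) \<partial>(Z1 \<Otimes>\<^sub>M W)) \<le> ennreal (exp ((\<alpha> - 1) * (\<epsilon>1 + \<epsilon>2)))" .
    from imp_renyi_le[OF alpha pjm pjm PJ PJ this] show ?thesis by (simp add: J)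
  qed
  show "\<And>D D'. adj D D' \<Longrightarrow>
      renyi_div \<alpha>
        (A D \<bind> (\<lambda>z. B z \<bind> (\<lambda>w. return (Z1 \<Otimes>\<^sub>M W) (fst z, w))))
        (A D' \<bind> (\<lambda>z. B z \<bind> (\<lambda>w. return (Z1 \<Otimes>\<^sub>M W) (fst z, w))))
      \<le> ereal (\<epsilon>1 + \<epsilon>2)" by (rule main)
qed

end
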